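(* Let a Hedonic diversity game contain a red agent $R$, a blue agent $B$ and $m\ge 1$ green agents, where the red, blue and green color classes are exactly $\{R\}$, $\{B\}$ and the set of these $m$ green agents, respectively (other colors may be present). For $j\in[m]$ write $G^jR$ (resp. $G^jB$) for the palette of a set consisting of $j$ green agents and $R$ (resp. $B$), write $RB$ for the palette of $\{R,B\}$, $\mathbf{R}$ for the palette of $\{R\}$, $\mathbf{B}$ for the palette of $\{B\}$, and $\mathbf{G}$ for the palette of any nonempty set of green agents only. Let $\mathcal{M}_G$ be a set of palettes, each of which is the palette of a set containing at least one green agent and at least one agent that is neither red, blue nor green. Suppose the preferences are: $R$: $RB \succ G^mR\succ\cdots\succ G^1R \succ \mathbf{R} \succ$ every other palette; $B$: $G^mB\succ\cdots\succ G^1B \succ RB \succ \mathbf{B}\succ$ every other palette; every green agent: every palette in $\mathcal{M}_G$ (in arbitrary mutual order) $\succ G^mR\succ\cdots\succ G^1R\succ G^mB\succ\cdots\succ G^1B\succ \mathbf{G}\succ$ every other palette. Then every outcome in which some green agent belongs to a coalition whose palette is not in $\mathcal{M}_G$ is neither individually stable nor Nash stable.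
   Context: A Hedonic diversity game consists of a set $N=[n]$ of agents partitioned into color classes $D_1,\dots,D_\gamma$, and, for each agent $i\in N$, a weak order $\succeq_i$ over palettes, where the palette of a nonempty set $X\subseteq N$ is the tuple $\left(|D_c\cap X|/|X|\right)_{c\in[\gamma]}$; agent $i$ compares nonempty sets $X,Y\subseteq N$ through their palettes. A coalition is a nonempty subset of $N$. An outcome is a partition $\Pi$ of $N$ into coalitions; $\Pi_i$ denotes the coalition of $\Pi$ containing agent $i$. Agent $i$ has an NS-deviation if there is $C\in\Pi\cup\{\emptyset\}$ with $i\notin C$ and $C\cup\{i\}\succ_i\Pi_i$; it is an IS-deviation if moreover $C\cup\{i\}\succeq_j C$ for every $j\in C$. $\Pi$ is Nash stable if no agent has an NS-deviation, and individually stable if no agent has an IS-deviation. *)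

theory Defs
  imports Complex_Main "HOL-Library.Disjoint_Sets"
begin

text \<open>Colours are natural numbers 0..<gamma (the paper's [gamma], shifted); col i is the colour
of agent i, so the colour class D_c is the set of agents in N of colour c.\<close>

definition palette :: "('a \<Rightarrow> nat) \<Rightarrow> nat \<Rightarrow> 'a set \<Rightarrow> real list" where
  "palette col \<gamma> X = map (\<lambda>c. real (card {i\<in>X. col i = c}) / real (card X)) [0..<\<gamma>]"

definition palettes :: "'a set \<Rightarrow> ('a \<Rightarrow> nat) \<Rightarrow> nat \<Rightarrow> real list set" where
  "palettes N col \<gamma> = {palette col \<gamma> X | X. X \<subseteq> N \<and> X \<noteq> {}}"

text \<open>pref i p q means p \<succeq>_i q; it is a weak order on palettes.\<close>
definition weak_order_on :: "'p set \<Rightarrow> ('p \<Rightarrow> 'p \<Rightarrow> bool) \<Rightarrow> bool" where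
  "weak_order_on S R \<longleftrightarrow> (\<forall>p\<in>S. \<forall>q\<in>S. R p q \<or> R q p) \<and>
     (\<forall>p\<in>S. \<forall>q\<in>S. \<forall>r\<in>S. R p q \<longrightarrow> R q r \<longrightarrow> R p r)"

definition spref :: "('a \<Rightarrow> real list \<Rightarrow> real list \<Rightarrow> bool) \<Rightarrow> 'a \<Rightarrow> real list \<Rightarrow> real list \<Rightarrow> bool" where
  "spref pref i p q \<longleftrightarrow> pref i p q \<and> \<not> pref i q p"

text \<open>Palette G^j x of a set consisting of x and j agents from the green set Gr
(it does not depend on which j green agents are chosen).\<close>
definition gpal :: "('a \<Rightarrow> nat) \<Rightarrow> nat \<Rightarrow> 'a set \<Rightarrow> nat \<Rightarrow> 'a \<Rightarrow> real list" where
  "gpal col \<gamma> Gr j x = palette col \<gamma> (insert x (SOME S. S \<subseteq> Gr \<and> card S = j))"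

definition coal :: "'a set set \<Rightarrow> 'a \<Rightarrow> 'a set" where
  "coal P i = (THE C. C \<in> P \<and> i \<in> C)"

definition NS_dev :: "('a \<Rightarrow> nat) \<Rightarrow> nat \<Rightarrow> ('a \<Rightarrow> real list \<Rightarrow> real list \<Rightarrow> bool)
    \<Rightarrow> 'a set set \<Rightarrow> 'a \<Rightarrow> bool" where
  "NS_dev col \<gamma> pref P i \<longleftrightarrow> (\<exists>C \<in> P \<union> {{}}. i \<notin> C \<and>
      spref pref i (palette col \<gamma> (insert i C)) (palette col \<gamma> (coal P i)))"

definition IS_dev :: "('a \<Rightarrow> nat) \<Rightarrow> nat \<Rightarrow> ('a \<Rightarrow> real list \<Rightarrow> real list \<Rightarrow> bool)
    \<Rightarrow> 'a set set \<Rightarrow> 'a \<Rightarrow> bool" where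
  "IS_dev col \<gamma> pref P i \<longleftrightarrow> (\<exists>C \<in> P \<union> {{}}. i \<notin> C \<and>
      spref pref i (palette col \<gamma> (insert i C)) (palette col \<gamma> (coal P i)) \<and>
      (\<forall>j\<in>C. pref j (palette col \<gamma> (insert i C)) (palette col \<gamma> C)))"

definition nash_stable where
  "nash_stable N col \<gamma> pref P \<longleftrightarrow> (\<forall>i\<in>N. \<not> NS_dev col \<gamma> pref P i)"

definition indiv_stable where
  "indiv_stable N col \<gamma> pref P \<longleftrightarrow> (\<forall>i\<in>N. \<not> IS_dev col \<gamma> pref P i)"

end

theory Submission
  imports Defs
begin
lemma nth_pal: "c < \<gamma> \<Longrightarrow> palette col \<gamma> X ! c = real (card {i\<in>X. col i = c}) / real (card X)"
  by (simp add: palette_def)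

lemma pal_eqI: "(\<And>c. c < \<gamma> \<Longrightarrow> real (card {i\<in>X. col i = c}) / real (card X)
     = real (card {i\<in>Y. col i = c}) / real (card Y)) \<Longrightarrow> palette col \<gamma> X = palette col \<gamma> Y"
  unfolding palette_def by (rule map_cong) auto

lemma ins_card_col:
  assumes "finite S" "\<forall>i\<in>S. col i = c0" "col x \<noteq> c0"
  shows "card {i\<in>insert x S. col i = c} = (if c = col x then 1 else 0) + (if c = c0 then card S else 0)"
    and "card (insert x S) = card S + 1"
proof -
  have xS: "x \<notin> S" using assms by auto
  show "card (insert x S) = card S + 1" using xS assms(1) by simp
  show "card {i\<in>insert x S. col i = c} = (if c = col x then 1 else 0) + (if c = c0 then card S else 0)"
  proof (cases "c = col x")
    case True
    then have e: "{i\<in>insert x S. col i = c} = {x}" using assms by auto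
    show ?thesis unfolding e using True assms by simp
  next
    case False
    show ?thesis
    proof (cases "c = c0")
      case True
      then have e: "{i\<in>insert x S. col i = c} = S" using assms False by auto
      show ?thesis unfolding e using True False by simp
    next
      case F2: False
      then have e: "{i\<in>insert x S. col i = c} = {}" using assms False by auto
      show ?thesis unfolding e using F2 False by simp
    qed
  qed
qed

lemma gpal_eq:
  assumes "finite Gr" "\<forall>i\<in>Gr. col i = c0" "S \<subseteq> Gr" "card S = j" "col x \<noteq> c0"
  shows "gpal col \<gamma> Gr j x = palette col \<gamma> (insert x S)"
proof -
  define S' where "S' = (SOME S. S \<subseteq> Gr \<and> card S = j)"
  have "S' \<subseteq> Gr \<and> card S' = j" unfolding S'_def by (rule someI[of _ S]) (use assms in auto)
  then have S': "S' \<subseteq> Gr" "card S' = j" by auto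
  have fS: "finite S" "finite S'" using assms S' finite_subset by auto
  have cS: "\<forall>i\<in>S. col i = c0" "\<forall>i\<in>S'. col i = c0" using assms S' by auto
  have "palette col \<gamma> (insert x S') = palette col \<gamma> (insert x S)"
    by (rule pal_eqI) (unfold ins_card_col[OF fS(1) cS(1) assms(5)] ins_card_col[OF fS(2) cS(2) assms(5)], simp add: S' assms(4))
  then show ?thesis unfolding gpal_def S'_def by simp
qed

lemma pal_struct:
  assumes fD: "finite D" and xD: "x \<in> D" and only: "{i\<in>D. col i = col x} = {x}"
    and eq: "palette col \<gamma> D = palette col \<gamma> (insert x S)"
    and fS: "finite S" and cS: "\<forall>i\<in>S. col i = c0" and ne: "col x \<noteq> c0"
    and lx: "col x < \<gamma>" and l0: "c0 < \<gamma>"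
  shows "D = insert x {i\<in>D. col i = c0} \<and> card {i\<in>D. col i = c0} = card S"
proof -
  define T where "T = {i\<in>D. col i = c0}"
  have cD: "card D > 0" using fD xD card_gt_0_iff by blast
  have "palette col \<gamma> D ! col x = palette col \<gamma> (insert x S) ! col x" using eq by simp
  then have "1 / real (card D) = 1 / (real (card S) + 1)"
    unfolding nth_pal[OF lx] only ins_card_col[OF fS cS ne] using ne by simp
  then have cD2: "real (card D) = real (card S) + 1" using cD
    by (simp add: field_simps)
  have "palette col \<gamma> D ! c0 = palette col \<gamma> (insert x S) ! c0" using eq by simp
  then have "real (card T) / real (card D) = real (card S) / (real (card S) + 1)"
    unfolding nth_pal[OF l0] T_def ins_card_col[OF fS cS ne] using ne by simp
  then have "real (card T) = real (card S)" using cD2 by (simp add: field_simps)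
  then have cT: "card T = card S" by simp
  have xT: "x \<notin> T" using ne T_def by auto
  have fT: "finite T" using fD T_def by simp
  have sub: "insert x T \<subseteq> D" using xD T_def by auto
  have "card (insert x T) = card D" using xT fT cT cD2 by simp
  then have "insert x T = D" using card_subset_eq[OF fD sub] by simp
  then show ?thesis using cT T_def by simp
qed

lemma pal_has_col:
  assumes fD: "finite D" and eq: "palette col \<gamma> D = palette col \<gamma> (insert x S)"
    and fS: "finite S" and cS: "\<forall>i\<in>S. col i = c0" and ne: "col x \<noteq> c0"
    and lx: "col x < \<gamma>"
  shows "\<exists>i\<in>D. col i = col x"
proof (rule ccontr)
  assume "\<not> ?thesis"
  then have e: "{i\<in>D. col i = col x} = {}" by auto
  have "palette col \<gamma> D ! col x = palette col \<gamma> (insert x S) ! col x" using eq by simp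
  then have "0 = 1 / (real (card S) + 1)"
    unfolding nth_pal[OF lx] ins_card_col[OF fS cS ne] e using ne by simp
  then show False by (simp add: field_simps)
qed

lemma pure_pal:
  assumes "finite X" "X \<noteq> {}" "\<forall>i\<in>X. col i = c0" "finite Y" "Y \<noteq> {}" "\<forall>i\<in>Y. col i = c0"
  shows "palette col \<gamma> X = palette col \<gamma> Y"
proof (rule pal_eqI)
  fix c
  have a: "{i\<in>X. col i = c} = (if c = c0 then X else {})" "{i\<in>Y. col i = c} = (if c = c0 then Y else {})"
    using assms by auto
  show "real (card {i\<in>X. col i = c}) / real (card X) = real (card {i\<in>Y. col i = c}) / real (card Y)"
    using assms by (simp add: a)
qed

lemma pure_struct:
  assumes fD: "finite D" "D \<noteq> {}" and eq: "palette col \<gamma> D = palette col \<gamma> X"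
    and "finite X" "X \<noteq> {}" "\<forall>i\<in>X. col i = c0" and l0: "c0 < \<gamma>"
  shows "\<forall>i\<in>D. col i = c0"
proof -
  have a: "{i\<in>X. col i = c0} = X" using assms by auto
  have cX: "card X > 0" using assms card_gt_0_iff by blast
  have cD: "card D > 0" using assms card_gt_0_iff by blast
  have "palette col \<gamma> D ! c0 = palette col \<gamma> X ! c0" using eq by simp
  then have "real (card {i\<in>D. col i = c0}) / real (card D) = 1" using l0 cX by (simp add: nth_pal a)
  then have "card {i\<in>D. col i = c0} = card D" using cD by (simp add: field_simps)
  then have "{i\<in>D. col i = c0} = D" using card_subset_eq[OF fD(1)] by (metis (no_types, lifting) mem_Collect_eq subsetI)
  then show ?thesis by blast
qed

lemma coal_eq:
  assumes "partition_on N P" "C \<in> P" "i \<in> C" shows "coal P i = C"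
  unfolding coal_def
proof (rule the_equality)
  show "C \<in> P \<and> i \<in> C" using assms by simp
  fix C' assume "C' \<in> P \<and> i \<in> C'"
  then show "C' = C" using partition_onD2[OF assms(1)] assms unfolding disjoint_def by blast
qed

lemma coal_in:
  assumes "partition_on N P" "i \<in> N" shows "coal P i \<in> P \<and> i \<in> coal P i \<and> coal P i \<subseteq> N"
proof -
  obtain C where "C \<in> P" "i \<in> C" using partition_onD1[OF assms(1)] assms(2) by blast
  then show ?thesis using coal_eq[OF assms(1)] partition_onD1[OF assms(1)] by auto
qed

lemma sp_trans:
  assumes "weak_order_on S (pref i)" "p\<in>S" "q\<in>S" "s\<in>S"
    "spref pref i p q" "spref pref i q s"
  shows "spref pref i p s"
  using assms unfolding weak_order_on_def spref_def by metis

lemma sp_ge: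
  assumes "weak_order_on S (pref i)" "p\<in>S" "q\<in>S" "s\<in>S"
    "spref pref i p q" "q = s \<or> spref pref i q s"
  shows "spref pref i p s"
  using assms sp_trans by metis

lemma ge_sp:
  assumes "weak_order_on S (pref i)" "p\<in>S" "q\<in>S" "s\<in>S"
    "p = q \<or> spref pref i p q" "spref pref i q s"
  shows "spref pref i p s"
  using assms sp_trans by metis

lemma chain:
  fixes f :: "nat \<Rightarrow> real list" and m j k :: nat
  assumes wo: "weak_order_on S (pref i)"
    and st: "\<forall>j. 1 \<le> j \<and> j < m \<longrightarrow> spref pref i (f (j+1)) (f j)"
    and inS: "\<forall>j. j \<le> m \<longrightarrow> f j \<in> S"
  shows "1 \<le> j \<Longrightarrow> j < k \<Longrightarrow> k \<le> m \<Longrightarrow> spref pref i (f k) (f j)"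
proof (induction k)
  case 0 then show ?case by simp
next
  case (Suc k)
  show ?case
  proof (cases "j = k")
    case True then show ?thesis using st Suc.prems by simp
  next
    case False
    then have "spref pref i (f k) (f j)" using Suc by simp
    moreover have "spref pref i (f (Suc k)) (f k)" using st Suc.prems False by simp
    moreover have "f k \<in> S" "f j \<in> S" "f (Suc k) \<in> S" using inS Suc.prems by auto
    ultimately show ?thesis using sp_trans[where S=S and pref=pref and i=i, OF wo] by blast
  qed
qed

lemma chain_ge:
  fixes f :: "nat \<Rightarrow> real list" and m j k :: nat
  assumes wo: "weak_order_on S (pref i)"
    and st: "\<forall>j. 1 \<le> j \<and> j < m \<longrightarrow> spref pref i (f (j+1)) (f j)"
    and inS: "\<forall>j. j \<le> m \<longrightarrow> f j \<in> S"
  shows "1 \<le> j \<Longrightarrow> j \<le> k \<Longrightarrow> k \<le> m \<Longrightarrow> f k = f j \<or> spref pref i (f k) (f j)"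
proof -
  assume a: "1 \<le> j" "j \<le> k" "k \<le> m"
  show ?thesis
  proof (cases "j = k")
    case False
    then show ?thesis using chain[OF assms a(1) _ a(3)] a(2) by simp
  qed simp
qed

theorem mainTheorem6:
  fixes N :: "'a set" and col :: "'a \<Rightarrow> nat" and \<gamma> :: nat
    and pref :: "'a \<Rightarrow> real list \<Rightarrow> real list \<Rightarrow> bool"
    and r b :: 'a and cR cB cG m :: nat and MG :: "real list set"
  assumes finN: "finite N"
    and colors: "\<forall>i\<in>N. col i < \<gamma>"
    and weak: "\<forall>i\<in>N. weak_order_on (palettes N col \<gamma>) (pref i)"
    and rN: "r \<in> N" and bN: "b \<in> N"
    and distinct_cols: "cR \<noteq> cB" "cR \<noteq> cG" "cB \<noteq> cG"
    and red: "{i\<in>N. col i = cR} = {r}"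
    and blue: "{i\<in>N. col i = cB} = {b}"
    and green_card: "card {i\<in>N. col i = cG} = m" and m1: "m \<ge> 1"
    and MG: "\<forall>p\<in>MG. \<exists>X. X \<subseteq> N \<and> p = palette col \<gamma> X \<and> (\<exists>i\<in>X. col i = cG)
                      \<and> (\<exists>i\<in>X. col i \<notin> {cR, cB, cG})"
    and prefR:
      "spref pref r (palette col \<gamma> {r, b}) (gpal col \<gamma> {i\<in>N. col i = cG} m r)"
      "\<forall>j. 1 \<le> j \<and> j < m \<longrightarrow> spref pref r (gpal col \<gamma> {i\<in>N. col i = cG} (j+1) r)
                                            (gpal col \<gamma> {i\<in>N. col i = cG} j r)"
      "spref pref r (gpal col \<gamma> {i\<in>N. col i = cG} 1 r) (palette col \<gamma> {r})"
      "\<forall>p \<in> palettes N col \<gamma>. p \<noteq> palette col \<gamma> {r, b} \<and> p \<noteq> palette col \<gamma> {r}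
          \<and> (\<forall>j\<in>{1..m}. p \<noteq> gpal col \<gamma> {i\<in>N. col i = cG} j r)
          \<longrightarrow> spref pref r (palette col \<gamma> {r}) p"
    and prefB:
      "\<forall>j. 1 \<le> j \<and> j < m \<longrightarrow> spref pref b (gpal col \<gamma> {i\<in>N. col i = cG} (j+1) b)
                                            (gpal col \<gamma> {i\<in>N. col i = cG} j b)"
      "spref pref b (gpal col \<gamma> {i\<in>N. col i = cG} 1 b) (palette col \<gamma> {r, b})"
      "spref pref b (palette col \<gamma> {r, b}) (palette col \<gamma> {b})"
      "\<forall>p \<in> palettes N col \<gamma>. p \<noteq> palette col \<gamma> {r, b} \<and> p \<noteq> palette col \<gamma> {b}
          \<and> (\<forall>j\<in>{1..m}. p \<noteq> gpal col \<gamma> {i\<in>N. col i = cG} j b)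
          \<longrightarrow> spref pref b (palette col \<gamma> {b}) p"
    and prefG: "\<forall>g\<in>{i\<in>N. col i = cG}.
      (\<forall>p\<in>MG. spref pref g p (gpal col \<gamma> {i\<in>N. col i = cG} m r)) \<and>
      (\<forall>j. 1 \<le> j \<and> j < m \<longrightarrow> spref pref g (gpal col \<gamma> {i\<in>N. col i = cG} (j+1) r)
                                            (gpal col \<gamma> {i\<in>N. col i = cG} j r)) \<and>
      spref pref g (gpal col \<gamma> {i\<in>N. col i = cG} 1 r) (gpal col \<gamma> {i\<in>N. col i = cG} m b) \<and>
      (\<forall>j. 1 \<le> j \<and> j < m \<longrightarrow> spref pref g (gpal col \<gamma> {i\<in>N. col i = cG} (j+1) b)
                                            (gpal col \<gamma> {i\<in>N. col i = cG} j b)) \<and>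
      spref pref g (gpal col \<gamma> {i\<in>N. col i = cG} 1 b) (palette col \<gamma> {i\<in>N. col i = cG}) \<and>
      (\<forall>p \<in> palettes N col \<gamma>. p \<notin> MG \<and> p \<noteq> palette col \<gamma> {i\<in>N. col i = cG}
          \<and> (\<forall>j\<in>{1..m}. p \<noteq> gpal col \<gamma> {i\<in>N. col i = cG} j r
                         \<and> p \<noteq> gpal col \<gamma> {i\<in>N. col i = cG} j b)
          \<longrightarrow> spref pref g (palette col \<gamma> {i\<in>N. col i = cG}) p)"
  shows "\<forall>P. partition_on N P \<and>
            (\<exists>g\<in>{i\<in>N. col i = cG}. palette col \<gamma> (coal P g) \<notin> MG)
          \<longrightarrow> \<not> indiv_stable N col \<gamma> pref P \<and> \<not> nash_stable N col \<gamma> pref P"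
proof (intro allI impI)
  fix P
  assume H: "partition_on N P \<and> (\<exists>g\<in>{i\<in>N. col i = cG}. palette col \<gamma> (coal P g) \<notin> MG)"
  have part: "partition_on N P" using H by simp
  define Gr where "Gr = {i\<in>N. col i = cG}"
  obtain g where gG: "g \<in> Gr" and gM: "palette col \<gamma> (coal P g) \<notin> MG" using H Gr_def by auto
  note prefR' = prefR[folded Gr_def]
  note prefB' = prefB[folded Gr_def]
  note prefG' = prefG[folded Gr_def]
  let ?PS = "palettes N col \<gamma>"
  let ?GR = "\<lambda>j. gpal col \<gamma> Gr j r"
  let ?GB = "\<lambda>j. gpal col \<gamma> Gr j b"
  have colr: "col r = cR" using red rN by blast
  have colb: "col b = cB" using blue bN by blast
  have redI: "\<And>i. i \<in> N \<Longrightarrow> col i = cR \<Longrightarrow> i = r"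
  proof -
    fix i assume "i \<in> N" "col i = cR"
    then have "i \<in> {i\<in>N. col i = cR}" by simp
    then show "i = r" using red by simp
  qed
  have blueI: "\<And>i. i \<in> N \<Longrightarrow> col i = cB \<Longrightarrow> i = b"
  proof -
    fix i assume "i \<in> N" "col i = cB"
    then have "i \<in> {i\<in>N. col i = cB}" by simp
    then show "i = b" using blue by simp
  qed
  have rb: "r \<noteq> b" using colr colb distinct_cols by auto
  have finGr: "finite Gr" using finN Gr_def by simp
  have GrN: "Gr \<subseteq> N" and Grc: "\<forall>i\<in>Gr. col i = cG" using Gr_def by auto
  have cardGr: "card Gr = m" using green_card Gr_def by simp
  have ltR: "cR < \<gamma>" using colors rN colr by auto
  have ltB: "cB < \<gamma>" using colors bN colb by auto
  have ltG: "cG < \<gamma>" using colors gG Gr_def by auto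
  have rG: "r \<notin> Gr" "b \<notin> Gr" using colr colb distinct_cols Gr_def by auto
  have gN: "g \<in> N" using gG GrN by auto
  have gnot: "g \<noteq> r" "g \<noteq> b" using rG gG by auto
  have palin: "\<And>X. X \<subseteq> N \<Longrightarrow> X \<noteq> {} \<Longrightarrow> palette col \<gamma> X \<in> ?PS"
    by (auto simp: palettes_def)
  have GRpal: "\<And>S. S \<subseteq> Gr \<Longrightarrow> ?GR (card S) = palette col \<gamma> (insert r S)"
    using gpal_eq[OF finGr Grc _ refl] colr distinct_cols by auto
  have GBpal: "\<And>S. S \<subseteq> Gr \<Longrightarrow> ?GB (card S) = palette col \<gamma> (insert b S)"
    using gpal_eq[OF finGr Grc _ refl] colb distinct_cols by auto
  have GRin: "\<forall>j. j \<le> m \<longrightarrow> ?GR j \<in> ?PS"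
  proof (intro allI impI)
    fix j assume "j \<le> m"
    then obtain S where S: "S \<subseteq> Gr" "card S = j" using obtain_subset_with_card_n cardGr by metis
    show "?GR j \<in> ?PS" using GRpal[OF S(1)] S palin[of "insert r S"] GrN rN by auto
  qed
  have GBin: "\<forall>j. j \<le> m \<longrightarrow> ?GB j \<in> ?PS"
  proof (intro allI impI)
    fix j assume "j \<le> m"
    then obtain S where S: "S \<subseteq> Gr" "card S = j" using obtain_subset_with_card_n cardGr by metis
    show "?GB j \<in> ?PS" using GBpal[OF S(1)] S palin[of "insert b S"] GrN bN by auto
  qed
  have RBin: "palette col \<gamma> {r,b} \<in> ?PS" using palin rN bN by auto
  have Rin: "palette col \<gamma> {r} \<in> ?PS" using palin rN by auto
  have Bin: "palette col \<gamma> {b} \<in> ?PS" using palin bN by auto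
  have GGin: "palette col \<gamma> Gr \<in> ?PS" using palin GrN gG by auto
  have wr: "weak_order_on ?PS (pref r)" using weak rN by auto
  have wb: "weak_order_on ?PS (pref b)" using weak bN by auto
  have wg: "\<And>h. h \<in> Gr \<Longrightarrow> weak_order_on ?PS (pref h)" using weak GrN by auto
  have m1': "1 \<le> m" using m1 .
  have r_RB_GR: "\<And>j. 1 \<le> j \<Longrightarrow> j \<le> m \<Longrightarrow> spref pref r (palette col \<gamma> {r,b}) (?GR j)"
  proof -
    fix j assume j: "1 \<le> j" "j \<le> m"
    have "?GR m = ?GR j \<or> spref pref r (?GR m) (?GR j)"
      by (rule chain_ge[where pref=pref and i=r and f="\<lambda>j. gpal col \<gamma> Gr j r", OF wr prefR'(2) GRin j order.refl])
    then show "spref pref r (palette col \<gamma> {r,b}) (?GR j)"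
      using sp_ge[where pref=pref and i=r, OF wr RBin _ _ prefR'(1)] GRin j by auto
  qed
  have r_GR_R: "\<And>j. 1 \<le> j \<Longrightarrow> j \<le> m \<Longrightarrow> spref pref r (?GR j) (palette col \<gamma> {r})"
  proof -
    fix j assume j: "1 \<le> j" "j \<le> m"
    have "?GR j = ?GR 1 \<or> spref pref r (?GR j) (?GR 1)"
      by (rule chain_ge[where pref=pref and i=r and f="\<lambda>j. gpal col \<gamma> Gr j r", OF wr prefR'(2) GRin order.refl j(1) j(2)])
    then show "spref pref r (?GR j) (palette col \<gamma> {r})"
      using ge_sp[where pref=pref and i=r, OF wr _ _ Rin _ prefR'(3)] GRin j m1' by auto
  qed
  have r_RB_R: "spref pref r (palette col \<gamma> {r,b}) (palette col \<gamma> {r})"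
    using sp_trans[where pref=pref and i=r, OF wr RBin _ Rin r_RB_GR[OF order.refl m1'] r_GR_R[OF order.refl m1']] GRin m1' by auto
  have b_GB_RB: "\<And>j. 1 \<le> j \<Longrightarrow> j \<le> m \<Longrightarrow> spref pref b (?GB j) (palette col \<gamma> {r,b})"
  proof -
    fix j assume j: "1 \<le> j" "j \<le> m"
    have "?GB j = ?GB 1 \<or> spref pref b (?GB j) (?GB 1)"
      by (rule chain_ge[where pref=pref and i=b and f="\<lambda>j. gpal col \<gamma> Gr j b", OF wb prefB'(1) GBin order.refl j(1) j(2)])
    then show "spref pref b (?GB j) (palette col \<gamma> {r,b})"
      using ge_sp[where pref=pref and i=b, OF wb _ _ RBin _ prefB'(2)] GBin j m1' by auto
  qed
  have h_GR_GB: "\<And>h j k. h \<in> Gr \<Longrightarrow> 1 \<le> j \<Longrightarrow> j \<le> m \<Longrightarrow> 1 \<le> k \<Longrightarrow> k \<le> m \<Longrightarrow>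
      spref pref h (?GR j) (?GB k)"
  proof -
    fix h j k assume h: "h \<in> Gr" and j: "1 \<le> j" "j \<le> m" and k: "1 \<le> k" "k \<le> m"
    note ph = prefG'[rule_format, OF h]
    have wh: "weak_order_on ?PS (pref h)" using wg h .
    have c1: "?GR j = ?GR 1 \<or> spref pref h (?GR j) (?GR 1)"
      by (rule chain_ge[where pref=pref and i=h and f="\<lambda>j. gpal col \<gamma> Gr j r", OF wh _ GRin order.refl j(1) j(2)]) (use ph in blast)
    have c2: "?GB m = ?GB k \<or> spref pref h (?GB m) (?GB k)"
      by (rule chain_ge[where pref=pref and i=h and f="\<lambda>j. gpal col \<gamma> Gr j b", OF wh _ GBin k order.refl]) (use ph in blast)
    have s1: "spref pref h (?GR 1) (?GB k)"
      using sp_ge[where pref=pref and i=h, OF wh _ _ _ _ c2] ph GRin GBin k m1' by auto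
    show "spref pref h (?GR j) (?GB k)"
      using ge_sp[where pref=pref and i=h, OF wh _ _ _ c1 s1] GRin GBin j k m1' by auto
  qed
  have h_GB_GG: "\<And>h k. h \<in> Gr \<Longrightarrow> 1 \<le> k \<Longrightarrow> k \<le> m \<Longrightarrow> spref pref h (?GB k) (palette col \<gamma> Gr)"
  proof -
    fix h k assume h: "h \<in> Gr" and k: "1 \<le> k" "k \<le> m"
    note ph = prefG'[rule_format, OF h]
    have wh: "weak_order_on ?PS (pref h)" using wg h .
    have c2: "?GB k = ?GB 1 \<or> spref pref h (?GB k) (?GB 1)"
      by (rule chain_ge[where pref=pref and i=h and f="\<lambda>j. gpal col \<gamma> Gr j b", OF wh _ GBin order.refl k]) (use ph in blast)
    show "spref pref h (?GB k) (palette col \<gamma> Gr)"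
      using ge_sp[where pref=pref and i=h, OF wh _ _ GGin c2] ph GBin k m1' by auto
  qed
  have h_GR_step: "\<And>h j. h \<in> Gr \<Longrightarrow> 1 \<le> j \<Longrightarrow> j < m \<Longrightarrow> spref pref h (?GR (j+1)) (?GR j)"
    using prefG' by blast
  have coalI: "\<And>i. i \<in> N \<Longrightarrow> coal P i \<in> P \<and> i \<in> coal P i \<and> coal P i \<subseteq> N"
    using coal_in[OF part] by blast
  have coalE: "\<And>C i. C \<in> P \<Longrightarrow> i \<in> C \<Longrightarrow> coal P i = C" using coal_eq[OF part] by blast
  have devI: "\<And>i C. i \<in> N \<Longrightarrow> C \<in> P \<union> {{}} \<Longrightarrow> i \<notin> C \<Longrightarrow>
      spref pref i (palette col \<gamma> (insert i C)) (palette col \<gamma> (coal P i)) \<Longrightarrow>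
      (\<forall>j\<in>C. pref j (palette col \<gamma> (insert i C)) (palette col \<gamma> C)) \<Longrightarrow>
      \<exists>i\<in>N. IS_dev col \<gamma> pref P i"
    unfolding IS_dev_def by blast
  have acases: "\<And>x. x \<in> {r,b} \<Longrightarrow>
      (\<forall>p \<in> ?PS. p \<noteq> palette col \<gamma> {r, b} \<and> p \<noteq> palette col \<gamma> {x}
          \<and> (\<forall>j\<in>{1..m}. p \<noteq> gpal col \<gamma> Gr j x) \<longrightarrow> spref pref x (palette col \<gamma> {x}) p) \<Longrightarrow>
      (\<exists>i\<in>N. IS_dev col \<gamma> pref P i) \<or> palette col \<gamma> (coal P x) = palette col \<gamma> {r,b}
      \<or> coal P x = {x} \<or> (\<exists>T. coal P x = insert x T \<and> T \<subseteq> Gr \<and> 1 \<le> card T \<and> card T \<le> m)"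
  proof -
    fix x assume x: "x \<in> {r,b}" and px: "\<forall>p \<in> ?PS. p \<noteq> palette col \<gamma> {r, b} \<and> p \<noteq> palette col \<gamma> {x}
          \<and> (\<forall>j\<in>{1..m}. p \<noteq> gpal col \<gamma> Gr j x) \<longrightarrow> spref pref x (palette col \<gamma> {x}) p"
    have xN: "x \<in> N" using x rN bN by auto
    have cx: "col x \<noteq> cG" "col x < \<gamma>" using x colr colb distinct_cols ltR ltB by auto
    have only: "\<And>D. D \<subseteq> N \<Longrightarrow> x \<in> D \<Longrightarrow> {i\<in>D. col i = col x} = {x}"
      using x red blue colr colb by blast
    define C where "C = coal P x"
    have C: "C \<in> P" "x \<in> C" "C \<subseteq> N" using coalI[OF xN] C_def by auto
    have fC: "finite C" using C(3) finN finite_subset by auto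
    show "(\<exists>i\<in>N. IS_dev col \<gamma> pref P i) \<or> palette col \<gamma> (coal P x) = palette col \<gamma> {r,b}
      \<or> coal P x = {x} \<or> (\<exists>T. coal P x = insert x T \<and> T \<subseteq> Gr \<and> 1 \<le> card T \<and> card T \<le> m)"
    proof (cases "palette col \<gamma> C = palette col \<gamma> {r,b}")
      case True then show ?thesis using C_def by simp
    next
      case nRB: False
      show ?thesis
      proof (cases "palette col \<gamma> C = palette col \<gamma> {x}")
        case True
        then have "palette col \<gamma> C = palette col \<gamma> (insert x {})" by simp
        from pal_struct[where col=col and \<gamma>=\<gamma>, OF fC C(2) only[OF C(3) C(2)] this _ _ cx(1) cx(2) ltG]
        have "C = insert x {i\<in>C. col i = cG} \<and> card {i\<in>C. col i = cG} = 0" by simp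
        moreover have "finite {i\<in>C. col i = cG}" using fC by simp
        ultimately have e1: "{i\<in>C. col i = cG} = {}" and e2: "C = insert x {i\<in>C. col i = cG}" by auto
        have "C = {x}" using e2 unfolding e1 .
        then show ?thesis using C_def by simp
      next
        case nR: False
        show ?thesis
        proof (cases "\<exists>j\<in>{1..m}. palette col \<gamma> C = gpal col \<gamma> Gr j x")
          case True
          then obtain j where j: "j \<in> {1..m}" "palette col \<gamma> C = gpal col \<gamma> Gr j x" by auto
          obtain S where S: "S \<subseteq> Gr" "card S = j" using obtain_subset_with_card_n cardGr j(1)
            by (metis atLeastAtMost_iff)
          have eq: "palette col \<gamma> C = palette col \<gamma> (insert x S)"
            using j(2) gpal_eq[OF finGr Grc S cx(1)] by simp
          have fS: "finite S" using S finGr finite_subset by auto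
          have cS: "\<forall>i\<in>S. col i = cG" using S Grc by auto
          from pal_struct[where col=col and \<gamma>=\<gamma>, OF fC C(2) only[OF C(3) C(2)] eq fS cS cx(1) cx(2) ltG]
          have "C = insert x {i\<in>C. col i = cG} \<and> card {i\<in>C. col i = cG} = j" using S by simp
          moreover have "{i\<in>C. col i = cG} \<subseteq> Gr" using C(3) Gr_def by auto
          ultimately show ?thesis using C_def j(1) by auto
        next
          case False
          have "palette col \<gamma> C \<in> ?PS" using palin C by auto
          then have sp: "spref pref x (palette col \<gamma> {x}) (palette col \<gamma> C)"
            using px nRB nR False by blast
          have "\<exists>i\<in>N. IS_dev col \<gamma> pref P i"
            by (rule devI[OF xN, of "{}"]) (use sp C_def in auto)
          then show ?thesis by simp
        qed
      qed
    qed
  qed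
  define Cr where "Cr = coal P r"
  define Cb where "Cb = coal P b"
  define Cg where "Cg = coal P g"
  have Cr: "Cr \<in> P" "r \<in> Cr" "Cr \<subseteq> N" using coalI[OF rN] Cr_def by auto
  have Cb: "Cb \<in> P" "b \<in> Cb" "Cb \<subseteq> N" using coalI[OF bN] Cb_def by auto
  have Cg: "Cg \<in> P" "g \<in> Cg" "Cg \<subseteq> N" using coalI[OF gN] Cg_def by auto
  have fin: "finite Cr" "finite Cb" "finite Cg"
    using finite_subset[OF Cr(3) finN] finite_subset[OF Cb(3) finN] finite_subset[OF Cg(3) finN] by auto
  have rcases: "(\<exists>i\<in>N. IS_dev col \<gamma> pref P i) \<or> palette col \<gamma> Cr = palette col \<gamma> {r,b}
      \<or> Cr = {r} \<or> (\<exists>T. Cr = insert r T \<and> T \<subseteq> Gr \<and> 1 \<le> card T \<and> card T \<le> m)"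
    using acases[of r] prefR'(4) Cr_def by auto
  have bcases: "(\<exists>i\<in>N. IS_dev col \<gamma> pref P i) \<or> palette col \<gamma> Cb = palette col \<gamma> {r,b}
      \<or> Cb = {b} \<or> (\<exists>U. Cb = insert b U \<and> U \<subseteq> Gr \<and> 1 \<le> card U \<and> card U \<le> m)"
    using acases[of b] prefB'(4) Cb_def by auto
  have notRB: "b \<notin> Cr \<Longrightarrow> palette col \<gamma> Cb \<noteq> palette col \<gamma> {r,b}"
  proof
    assume nb: "b \<notin> Cr" and eq: "palette col \<gamma> Cb = palette col \<gamma> {r,b}"
    have "\<exists>i\<in>Cb. col i = col r"
      by (rule pal_has_col[where col=col and \<gamma>=\<gamma> and x=r and S="{b}", OF fin(2) _ _ _ _ ltR[folded colr]])
         (use eq colb colr distinct_cols in auto)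
    then have "r \<in> Cb" using Cb(3) redI colr by blast
    then have "Cr = Cb" using coalE[OF Cb(1)] Cr_def by simp
    then show False using nb Cb by simp
  qed
  have main: "\<exists>i\<in>N. IS_dev col \<gamma> pref P i"
  proof -
    { assume "palette col \<gamma> Cr = palette col \<gamma> {r,b}"
      then have eq: "palette col \<gamma> Cr = palette col \<gamma> (insert r {b})" by simp
      have onlyr: "{i\<in>Cr. col i = col r} = {r}" using Cr red colr by blast
      from pal_struct[where col=col and \<gamma>=\<gamma>, OF fin(1) Cr(2) onlyr eq _ _ _ _ ltB] colr colb distinct_cols ltR
      have st: "Cr = insert r {i\<in>Cr. col i = cB} \<and> card {i\<in>Cr. col i = cB} = 1" by simp
      have "{i\<in>Cr. col i = cB} \<subseteq> {b}" using Cr(3) blue by blast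
      then have "{i\<in>Cr. col i = cB} = {b}" using st
        by (metis card_1_singletonE singleton_insert_inj_eq subset_singletonD zero_neq_one card.empty)
      then have CrRB: "Cr = {r,b}" using st by simp
      then have CbCr: "Cb = Cr" using coalE[OF Cr(1)] Cb_def by simp
      have gCr: "g \<notin> Cr" using CrRB gnot by simp
      have ?thesis
      proof (cases "palette col \<gamma> Cg = palette col \<gamma> Gr")
        case True
        have allg: "\<forall>i\<in>Cg. col i = cG"
          by (rule pure_struct[OF fin(3) _ True finGr _ Grc ltG]) (use Cg gG in auto)
        then have CgG: "Cg \<subseteq> Gr" using Cg(3) Gr_def by auto
        have k: "1 \<le> card Cg" "card Cg \<le> m" using CgG Cg(2) fin(3) card_mono[OF finGr CgG] cardGr
          by (auto simp: Suc_le_eq card_gt_0_iff)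
        have bCg: "b \<notin> Cg" using CgG rG by auto
        show ?thesis
        proof (rule devI[OF bN, of Cg])
          show "Cg \<in> P \<union> {{}}" using Cg by simp
          show "b \<notin> Cg" by fact
          show "spref pref b (palette col \<gamma> (insert b Cg)) (palette col \<gamma> (coal P b))"
            using b_GB_RB[OF k] GBpal[OF CgG] CbCr Cb_def \<open>palette col \<gamma> Cr = palette col \<gamma> {r,b}\<close>
            by simp
          show "\<forall>j\<in>Cg. pref j (palette col \<gamma> (insert b Cg)) (palette col \<gamma> Cg)"
            using h_GB_GG[OF _ k] GBpal[OF CgG] CgG True unfolding spref_def by auto
        qed
      next
        case nGG: False
        have pin: "palette col \<gamma> Cg \<in> ?PS" using palin Cg by auto
        have nGR: "\<forall>j\<in>{1..m}. palette col \<gamma> Cg \<noteq> ?GR j \<and> palette col \<gamma> Cg \<noteq> ?GB j"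
        proof
          fix j assume j: "j \<in> {1..m}"
          obtain S where S: "S \<subseteq> Gr" "card S = j" using obtain_subset_with_card_n cardGr j
            by (metis atLeastAtMost_iff)
          have fS: "finite S" using S finGr finite_subset by auto
          have cS: "\<forall>i\<in>S. col i = cG" using S Grc by auto
          show "palette col \<gamma> Cg \<noteq> ?GR j \<and> palette col \<gamma> Cg \<noteq> ?GB j"
          proof (intro conjI notI)
            assume "palette col \<gamma> Cg = ?GR j"
            then have "palette col \<gamma> Cg = palette col \<gamma> (insert r S)" using GRpal[OF S(1)] S by simp
            from pal_has_col[where col=col and \<gamma>=\<gamma>, OF fin(3) this fS cS] colr distinct_cols ltR
            have "\<exists>i\<in>Cg. col i = cR" by auto
            then have "r \<in> Cg" using Cg(3) redI by blast
            then have "Cg = Cr" using coalE[OF Cg(1)] Cr_def by simp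
            then show False using gCr Cg by simp
          next
            assume "palette col \<gamma> Cg = ?GB j"
            then have "palette col \<gamma> Cg = palette col \<gamma> (insert b S)" using GBpal[OF S(1)] S by simp
            from pal_has_col[where col=col and \<gamma>=\<gamma>, OF fin(3) this fS cS] colb distinct_cols ltB
            have "\<exists>i\<in>Cg. col i = cB" by auto
            then have "b \<in> Cg" using Cg(3) blueI by blast
            then have "Cg = Cr" using coalE[OF Cg(1)] CbCr Cb_def by simp
            then show False using gCr Cg by simp
          qed
        qed
        have gMG: "palette col \<gamma> Cg \<notin> MG" using gM Cg_def by simp
        have sp: "spref pref g (palette col \<gamma> Gr) (palette col \<gamma> Cg)"
          using prefG'[rule_format, OF gG] pin gMG nGG nGR by blast
        have "palette col \<gamma> {g} = palette col \<gamma> Gr"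
          by (rule pure_pal) (use gG Grc finGr in auto)
        then show ?thesis
          by (intro devI[OF gN, of "{}"]) (use sp Cg_def in auto)
      qed
    }
    moreover
    { assume CrR: "Cr = {r}"
      have bCr: "b \<notin> Cr" using CrR rb by auto
      have ?thesis using bcases
      proof (elim disjE)
        assume "palette col \<gamma> Cb = palette col \<gamma> {r,b}" then show ?thesis using notRB[OF bCr] by simp
      next
        assume CbB: "Cb = {b}"
        show ?thesis
        proof (rule devI[OF rN, of Cb])
          show "Cb \<in> P \<union> {{}}" using Cb by simp
          show "r \<notin> Cb" using CbB rb by simp
          show "spref pref r (palette col \<gamma> (insert r Cb)) (palette col \<gamma> (coal P r))"
            using r_RB_R CbB CrR Cr_def by simp
          show "\<forall>j\<in>Cb. pref j (palette col \<gamma> (insert r Cb)) (palette col \<gamma> Cb)"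
            using prefB'(3) CbB unfolding spref_def by simp
        qed
      next
        assume "\<exists>U. Cb = insert b U \<and> U \<subseteq> Gr \<and> 1 \<le> card U \<and> card U \<le> m"
        then obtain U where U: "Cb = insert b U" "U \<subseteq> Gr" "1 \<le> card U" "card U \<le> m" by blast
        obtain h where hU: "h \<in> U" using U(3) by (metis card.empty ex_in_conv not_one_le_zero)
        have hG: "h \<in> Gr" using hU U by auto
        have hN: "h \<in> N" using hG GrN by auto
        have ch: "coal P h = Cb" using coalE[OF Cb(1)] hU U by simp
        have hS: "{h} \<subseteq> Gr" using hG by simp
        show ?thesis
        proof (rule devI[OF hN, of Cr])
          show "Cr \<in> P \<union> {{}}" using Cr by simp
          show "h \<notin> Cr" using CrR hG rG by auto
          have e: "palette col \<gamma> (insert h Cr) = ?GR 1"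
            using GRpal[OF hS] CrR by (simp add: insert_commute)
          show "spref pref h (palette col \<gamma> (insert h Cr)) (palette col \<gamma> (coal P h))"
            using e ch h_GR_GB[OF hG order.refl m1' U(3) U(4)] GBpal[OF U(2)] U(1) by simp
          show "\<forall>j\<in>Cr. pref j (palette col \<gamma> (insert h Cr)) (palette col \<gamma> Cr)"
            using e prefR'(3) CrR unfolding spref_def by simp
        qed
      qed simp
    }
    moreover
    { assume "\<exists>T. Cr = insert r T \<and> T \<subseteq> Gr \<and> 1 \<le> card T \<and> card T \<le> m"
      then obtain T where T: "Cr = insert r T" "T \<subseteq> Gr" "1 \<le> card T" "card T \<le> m" by blast
      have bCr: "b \<notin> Cr" using T rb rG by auto
      have fT: "finite T" using T(2) finGr finite_subset by auto
      have palCr: "palette col \<gamma> Cr = ?GR (card T)" using GRpal[OF T(2)] T(1) by simp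
      have ?thesis using bcases
      proof (elim disjE)
        assume "palette col \<gamma> Cb = palette col \<gamma> {r,b}" then show ?thesis using notRB[OF bCr] by simp
      next
        assume CbB: "Cb = {b}"
        show ?thesis
        proof (rule devI[OF rN, of Cb])
          show "Cb \<in> P \<union> {{}}" using Cb by simp
          show "r \<notin> Cb" using CbB rb by simp
          show "spref pref r (palette col \<gamma> (insert r Cb)) (palette col \<gamma> (coal P r))"
            using r_RB_GR[OF T(3) T(4)] CbB palCr Cr_def by simp
          show "\<forall>j\<in>Cb. pref j (palette col \<gamma> (insert r Cb)) (palette col \<gamma> Cb)"
            using prefB'(3) CbB unfolding spref_def by simp
        qed
      next
        assume "\<exists>U. Cb = insert b U \<and> U \<subseteq> Gr \<and> 1 \<le> card U \<and> card U \<le> m"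
        then obtain U where U: "Cb = insert b U" "U \<subseteq> Gr" "1 \<le> card U" "card U \<le> m" by blast
        obtain h where hU: "h \<in> U" using U(3) by (metis card.empty ex_in_conv not_one_le_zero)
        have hG: "h \<in> Gr" using hU U by auto
        have hN: "h \<in> N" using hG GrN by auto
        have ch: "coal P h = Cb" using coalE[OF Cb(1)] hU U by simp
        have hCr: "h \<notin> Cr"
        proof
          assume "h \<in> Cr"
          then have "coal P h = Cr" using coalE[OF Cr(1)] by simp
          then show False using ch bCr Cb by simp
        qed
        have hT: "h \<notin> T" using hCr T by auto
        have hTS: "insert h T \<subseteq> Gr" using hG T by auto
        have cardhT: "card (insert h T) = card T + 1" using hT fT by simp
        have le: "card T + 1 \<le> m" using card_mono[OF finGr hTS] cardhT cardGr by simp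
        have e: "palette col \<gamma> (insert h Cr) = ?GR (card T + 1)"
          using GRpal[OF hTS] cardhT T(1) by (simp add: insert_commute)
        show ?thesis
        proof (rule devI[OF hN, of Cr])
          show "Cr \<in> P \<union> {{}}" using Cr by simp
          show "h \<notin> Cr" by fact
          show "spref pref h (palette col \<gamma> (insert h Cr)) (palette col \<gamma> (coal P h))"
            using e ch h_GR_GB[OF hG _ le U(3) U(4)] GBpal[OF U(2)] U(1) by simp
          show "\<forall>j\<in>Cr. pref j (palette col \<gamma> (insert h Cr)) (palette col \<gamma> Cr)"
          proof
            fix j assume "j \<in> Cr"
            then have "j = r \<or> j \<in> T" using T(1) by simp
            moreover have "spref pref r (?GR (card T + 1)) (?GR (card T))"
              using prefR'(2) T(3) le by simp
            moreover have "\<And>t. t \<in> T \<Longrightarrow> spref pref t (?GR (card T + 1)) (?GR (card T))"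
              using h_GR_step T(2,3) le by auto
            ultimately show "pref j (palette col \<gamma> (insert h Cr)) (palette col \<gamma> Cr)"
              using e palCr unfolding spref_def by auto
          qed
        qed
      qed simp
    }
    ultimately show ?thesis using rcases by blast
  qed
  show "\<not> indiv_stable N col \<gamma> pref P \<and> \<not> nash_stable N col \<gamma> pref P"
    using main unfolding indiv_stable_def nash_stable_def IS_dev_def NS_dev_def by blast
qed

end
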